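(* Consider optimal control problem OCP-1 (described in the context). The optimal control $u_*^1$ (given pointwise by maximization of the Hamiltonian along the optimal trajectory and adjoint function) is a continuous function on the interval $[0,T]$.
   Context: Parameters: $\beta_1,\beta_2,\gamma,\rho_1,\rho_2>0$; $\sigma_1,\sigma_2>0$ with $\sigma_1+\sigma_2=1$; $0\le u_{\max}<1$; weights $\alpha_1,\alpha_2\ge0$, $\alpha_3>0$; horizon $T>0$; initial values $s_0,e_0,i_0,j_0>0$ with $s_0+e_0+i_0+j_0\le 1$. The admissible controls are all Lebesgue measurable $u:[0,T]\to[0,u_{\max}]$. The state system is $s'=-s(\beta_1(1-u)^2i+\beta_2(1-u)j)$, $e'=s(\beta_1(1-u)^2i+\beta_2(1-u)j)-\gamma e$, $i'=\sigma_1\gamma e-\rho_1 i$, $j'=\sigma_2\gamma e-\rho_2 j$, with $s(0)=s_0,e(0)=e_0,i(0)=i_0,j(0)=j_0$. OCP-1 is the problem of minimizing $Q(u)=\alpha_1(e(T)+i(T)+j(T))+\alpha_2\int_0^T(e+i+j)\,dt+0.5\alpha_3\int_0^Tu^2\,dt$ over admissible controls. Its Hamiltonian is $H(s,e,i,j,\psi_1,\dots,\psi_4,u)=-s(\beta_1(1-u)^2i+\beta_2(1-u)j)(\psi_1-\psi_2)-\gamma e(\psi_2-\sigma_1\psi_3-\sigma_2\psi_4)-\rho_1 i\psi_3-\rho_2 j\psi_4-\alpha_2(e+i+j)-0.5\alpha_3u^2$. For an optimal control $u_*^1$ with optimal trajectory $(s_*^1,e_*^1,i_*^1,j_*^1)$,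 the adjoint function $\psi_*=(\psi_1^*,\dots,\psi_4^* )$ of the Pontryagin maximum principle is a nontrivial solution of $\psi_1'=(\beta_1(1-u_*^1)^2i_*^1+\beta_2(1-u_*^1)j_*^1)(\psi_1-\psi_2)$, $\psi_2'=\gamma(\psi_2-\sigma_1\psi_3-\sigma_2\psi_4)+\alpha_2$, $\psi_3'=\beta_1(1-u_*^1)^2s_*^1(\psi_1-\psi_2)+\rho_1\psi_3+\alpha_2$, $\psi_4'=\beta_2(1-u_*^1)s_*^1(\psi_1-\psi_2)+\rho_2\psi_4+\alpha_2$, with $\psi_1(T)=0$, $\psi_2(T)=\psi_3(T)=\psi_4(T)=-\alpha_1$, and $u_*^1(t)$ maximizes $H(s_*^1(t),e_*^1(t),i_*^1(t),j_*^1(t),\psi_*(t),u)$ over $u\in[0,u_{\max}]$. *)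

theory Defs
  imports "HOL-Analysis.Analysis"
begin

definition admissible :: "real \<Rightarrow> real \<Rightarrow> (real \<Rightarrow> real) \<Rightarrow> bool" where
  "admissible umax T u \<longleftrightarrow>
     u \<in> borel_measurable (lebesgue_on {0..T}) \<and> (\<forall>t\<in>{0..T}. 0 \<le> u t \<and> u t \<le> umax)"

definition incid :: "real \<Rightarrow> real \<Rightarrow> real \<Rightarrow> real \<Rightarrow> real \<Rightarrow> real \<Rightarrow> real" where
  "incid b1 b2 u s i j = s * (b1 * (1 - u)^2 * i + b2 * (1 - u) * j)"

text \<open>(s,e,i,j) is a (Caratheodory) solution of the state system on [0,T] for control u,
  written in integral form.\<close>
definition state_sol ::
  "real \<Rightarrow> real \<Rightarrow> real \<Rightarrow> real \<Rightarrow> real \<Rightarrow> real \<Rightarrow> real \<Rightarrow> real \<Rightarrow>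
   real \<Rightarrow> real \<Rightarrow> real \<Rightarrow> real \<Rightarrow>
   (real \<Rightarrow> real) \<Rightarrow> (real \<Rightarrow> real) \<Rightarrow> (real \<Rightarrow> real) \<Rightarrow> (real \<Rightarrow> real) \<Rightarrow> (real \<Rightarrow> real) \<Rightarrow> bool" where
  "state_sol b1 b2 g sg1 sg2 r1 r2 T s0 e0 i0 j0 u s e i j \<longleftrightarrow>
     (\<forall>t\<in>{0..T}.
        ((\<lambda>\<tau>. - incid b1 b2 (u \<tau>) (s \<tau>) (i \<tau>) (j \<tau>)) has_integral (s t - s0)) {0..t} \<and>
        ((\<lambda>\<tau>. incid b1 b2 (u \<tau>) (s \<tau>) (i \<tau>) (j \<tau>) - g * e \<tau>) has_integral (e t - e0)) {0..t} \<and>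
        ((\<lambda>\<tau>. sg1 * g * e \<tau> - r1 * i \<tau>) has_integral (i t - i0)) {0..t} \<and>
        ((\<lambda>\<tau>. sg2 * g * e \<tau> - r2 * j \<tau>) has_integral (j t - j0)) {0..t})"

definition cost :: "real \<Rightarrow> real \<Rightarrow> real \<Rightarrow> real \<Rightarrow>
   (real \<Rightarrow> real) \<Rightarrow> (real \<Rightarrow> real) \<Rightarrow> (real \<Rightarrow> real) \<Rightarrow> (real \<Rightarrow> real) \<Rightarrow> real" where
  "cost a1 a2 a3 T u e i j =
     a1 * (e T + i T + j T) + a2 * integral {0..T} (\<lambda>t. e t + i t + j t)
     + 0.5 * a3 * integral {0..T} (\<lambda>t. (u t)^2)"

definition hamiltonian ::
  "real \<Rightarrow> real \<Rightarrow> real \<Rightarrow> real \<Rightarrow> real \<Rightarrow> real \<Rightarrow> real \<Rightarrow> real \<Rightarrow> real \<Rightarrow>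
   real \<Rightarrow> real \<Rightarrow> real \<Rightarrow> real \<Rightarrow> real \<Rightarrow> real \<Rightarrow> real \<Rightarrow> real \<Rightarrow> real \<Rightarrow> real" where
  "hamiltonian b1 b2 g sg1 sg2 r1 r2 a2 a3 s e i j p1 p2 p3 p4 u =
     - incid b1 b2 u s i j * (p1 - p2) - g * e * (p2 - sg1 * p3 - sg2 * p4)
     - r1 * i * p3 - r2 * j * p4 - a2 * (e + i + j) - 0.5 * a3 * u^2"

definition adjoint_sol ::
  "real \<Rightarrow> real \<Rightarrow> real \<Rightarrow> real \<Rightarrow> real \<Rightarrow> real \<Rightarrow> real \<Rightarrow> real \<Rightarrow> real \<Rightarrow> real \<Rightarrow>
   (real \<Rightarrow> real) \<Rightarrow> (real \<Rightarrow> real) \<Rightarrow> (real \<Rightarrow> real) \<Rightarrow> (real \<Rightarrow> real) \<Rightarrow>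
   (real \<Rightarrow> real) \<Rightarrow> (real \<Rightarrow> real) \<Rightarrow> (real \<Rightarrow> real) \<Rightarrow> (real \<Rightarrow> real) \<Rightarrow> bool" where
  "adjoint_sol b1 b2 g sg1 sg2 r1 r2 a1 a2 T u s i j p1 p2 p3 p4 \<longleftrightarrow>
     p1 T = 0 \<and> p2 T = - a1 \<and> p3 T = - a1 \<and> p4 T = - a1 \<and>
     (\<forall>t\<in>{0..T}.
        ((\<lambda>\<tau>. (b1 * (1 - u \<tau>)^2 * i \<tau> + b2 * (1 - u \<tau>) * j \<tau>) * (p1 \<tau> - p2 \<tau>))
            has_integral (p1 T - p1 t)) {t..T} \<and>
        ((\<lambda>\<tau>. g * (p2 \<tau> - sg1 * p3 \<tau> - sg2 * p4 \<tau>) + a2)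
            has_integral (p2 T - p2 t)) {t..T} \<and>
        ((\<lambda>\<tau>. b1 * (1 - u \<tau>)^2 * s \<tau> * (p1 \<tau> - p2 \<tau>) + r1 * p3 \<tau> + a2)
            has_integral (p3 T - p3 t)) {t..T} \<and>
        ((\<lambda>\<tau>. b2 * (1 - u \<tau>) * s \<tau> * (p1 \<tau> - p2 \<tau>) + r2 * p4 \<tau> + a2)
            has_integral (p4 T - p4 t)) {t..T})"

end

theory Submission imports Defs begin

lemma int_sub:
  fixes f x :: "real \<Rightarrow> real"
  assumes h: "\<forall>t\<in>{0..T}. (f has_integral (x t - x0)) {0..t}"
    and "0 \<le> t" "t \<le> t'" "t' \<le> T"
  shows "(f has_integral (x t' - x t)) {t..t'}"
proof -
  have "t' \<in> {0..T}" "t \<in> {0..T}" using assms(2-4) by auto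
  then have h1: "(f has_integral (x t' - x0)) {0..t'}" and h2: "(f has_integral (x t - x0)) {0..t}"
    using h by blast+
  have i1: "f integrable_on {0..t'}" using h1 by (rule has_integral_integrable)
  have i2: "f integrable_on {t..t'}" using integrable_subinterval_real[OF i1] assms(2-4) by auto
  have "integral {0..t} f + integral {t..t'} f = integral {0..t'} f"
    using Henstock_Kurzweil_Integration.integral_combine[OF assms(2,3) i1] by simp
  then have "integral {t..t'} f = x t' - x t"
    using integral_unique[OF h1] integral_unique[OF h2] by simp
  then show ?thesis using i2 by (metis has_integral_integral)
qed

lemma cont_fwd:
  fixes f x :: "real \<Rightarrow> real"
  assumes h: "\<forall>t\<in>{0..T}. (f has_integral (x t - x0)) {0..t}" and T: "0 \<le> T"
  shows "continuous_on {0..T} x"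
proof -
  have "T \<in> {0..T}" using T by simp
  then have "(f has_integral (x T - x0)) {0..T}" using h by blast
  then have i1: "f integrable_on {0..T}" by (rule has_integral_integrable)
  have c: "continuous_on {0..T} (\<lambda>t. x0 + integral {0..t} f)"
    by (rule continuous_on_add[OF continuous_on_const indefinite_integral_continuous_1[OF i1]])
  show ?thesis
  proof (rule continuous_on_eq[OF c])
    fix t assume "t \<in> {0..T}"
    then have "(f has_integral (x t - x0)) {0..t}" using h by blast
    then have "integral {0..t} f = x t - x0" by (rule integral_unique)
    then show "x0 + integral {0..t} f = x t" by simp
  qed
qed

lemma cont_bwd:
  fixes f x :: "real \<Rightarrow> real"
  assumes h: "\<forall>t\<in>{0..T}. (f has_integral (x T - x t)) {t..T}" and T: "0 \<le> T"
  shows "continuous_on {0..T} x"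
proof -
  have "0 \<in> {0..T}" using T by simp
  then have "(f has_integral (x T - x 0)) {0..T}" using h by blast
  then have i1: "f integrable_on {0..T}" by (rule has_integral_integrable)
  have c: "continuous_on {0..T} (\<lambda>t. x T - integral {t..T} f)"
    by (rule continuous_on_diff[OF continuous_on_const indefinite_integral_continuous_1'[OF i1]])
  show ?thesis
  proof (rule continuous_on_eq[OF c])
    fix t assume "t \<in> {0..T}"
    then have "(f has_integral (x T - x t)) {t..T}" using h by blast
    then have "integral {t..T} f = x T - x t" by (rule integral_unique)
    then show "x T - integral {t..T} f = x t" by simp
  qed
qed

lemma init_val:
  fixes f x :: "real \<Rightarrow> real"
  assumes h: "\<forall>t\<in>{0..T}. (f has_integral (x t - x0)) {0..t}" and T: "0 \<le> T"
  shows "x 0 = x0"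
proof -
  have "0 \<in> {0..T}" using T by simp
  then have A: "(f has_integral (x 0 - x0)) {0..0}" using h by blast
  have B: "(f has_integral 0) {0..(0::real)}" using has_integral_refl(2) by simp
  have "x 0 - x0 = 0" by (rule has_integral_unique[OF A B])
  then show ?thesis by simp
qed

lemma step_cond:
  fixes f x :: "real \<Rightarrow> real"
  assumes h: "\<forall>t\<in>{0..T}. (f has_integral (x t - x0)) {0..t}"
    and b: "0 \<le> b" "b \<le> T" and cx: "continuous_on {0..b} x"
    and nn: "\<forall>\<tau>\<in>{0..b}. f \<tau> + c * x \<tau> \<ge> 0"
  shows "\<forall>t\<in>{0..b}. x t - c * integral {t..b} x \<le> x b"
proof
  fix t assume t: "t \<in> {0..b}"
  have a1: "(f has_integral (x b - x t)) {t..b}" using int_sub[OF h, of t b] t b by simp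
  have "continuous_on {t..b} x" using continuous_on_subset[OF cx] t by auto
  then have "x integrable_on {t..b}" by (rule integrable_continuous_interval)
  then have a2: "((\<lambda>\<tau>. c * x \<tau>) has_integral (c * integral {t..b} x)) {t..b}"
    by (intro has_integral_mult_right integrable_integral)
  have a3: "((\<lambda>\<tau>. f \<tau> + c * x \<tau>) has_integral (x b - x t + c * integral {t..b} x)) {t..b}"
    using has_integral_add[OF a1 a2] by simp
  have "0 \<le> x b - x t + c * integral {t..b} x"
    by (rule has_integral_nonneg[OF a3]) (use nn t in auto)
  then show "x t - c * integral {t..b} x \<le> x b" by simp
qed

lemma pos_end:
  fixes x :: "real \<Rightarrow> real"
  assumes ab: "a < b" and cx: "continuous_on {a..b} x" and pos: "\<forall>t\<in>{a..<b}. x t > 0"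
    and c: "c \<ge> 0" and st: "\<forall>t\<in>{a..b}. x t - c * integral {t..b} x \<le> x b"
  shows "x b > 0"
proof (rule ccontr)
  assume "\<not> x b > 0"
  then have xb: "x b \<le> 0" by simp
  define t0 where "t0 = max a (b - 1/(2*c+2))"
  have t0a: "a \<le> t0" and t0b: "t0 < b" using ab c unfolding t0_def by auto
  have cd: "c * (b - t0) < 1"
  proof -
    have "b - t0 \<le> 1/(2*c+2)" unfolding t0_def by auto
    then have "c * (b - t0) \<le> c * (1/(2*c+2))" using c by (intro mult_left_mono) auto
    also have "\<dots> < 1" using c by (simp add: field_simps)
    finally show ?thesis .
  qed
  have cx0: "continuous_on {t0..b} x" using continuous_on_subset[OF cx] t0a by auto
  have ne: "{t0..b} \<noteq> {}" using t0b by simp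
  obtain \<tau> where tau: "\<tau> \<in> {t0..b}" and mx: "\<forall>y\<in>{t0..b}. x y \<le> x \<tau>"
    using continuous_attains_sup[OF compact_Icc ne cx0] by blast
  have xt0: "x t0 > 0" using pos t0a t0b by auto
  have "x t0 \<le> x \<tau>" using mx t0b by auto
  then have M: "x \<tau> > 0" using xt0 by linarith
  have "continuous_on {\<tau>..b} x" using continuous_on_subset[OF cx0] tau by auto
  then have ix: "x integrable_on {\<tau>..b}" by (rule integrable_continuous_interval)
  have "integral {\<tau>..b} x \<le> integral {\<tau>..b} (\<lambda>_. x \<tau>)"
    by (rule integral_le[OF ix]) (use mx tau in auto)
  also have "\<dots> = (b - \<tau>) * x \<tau>" using tau by simp
  finally have I: "integral {\<tau>..b} x \<le> (b - \<tau>) * x \<tau>" .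
  have "\<tau> \<in> {a..b}" using tau t0a by auto
  then have "x \<tau> - c * integral {\<tau>..b} x \<le> x b" using st by blast
  then have "x \<tau> \<le> x b + c * integral {\<tau>..b} x" by simp
  also have "\<dots> \<le> c * ((b - \<tau>) * x \<tau>)"
  proof -
    have "c * integral {\<tau>..b} x \<le> c * ((b - \<tau>) * x \<tau>)" using I c by (rule mult_left_mono)
    then show ?thesis using xb by linarith
  qed
  also have "\<dots> \<le> c * ((b - t0) * x \<tau>)"
  proof (rule mult_left_mono[OF _ c])
    show "(b - \<tau>) * x \<tau> \<le> (b - t0) * x \<tau>" using tau M by (intro mult_right_mono) auto
  qed
  also have "\<dots> = (c * (b - t0)) * x \<tau>" by (simp add: mult.assoc)
  also have "\<dots> < 1 * x \<tau>" by (rule mult_strict_right_mono[OF cd M])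
  finally show False by simp
qed

lemma positivity:
  fixes b1 b2 g r1 r2 sg1 sg2 umax T s0 e0 i0 j0 :: real
    and u s e i j :: "real \<Rightarrow> real"
  assumes par: "b1 > 0" "b2 > 0" "g > 0" "r1 > 0" "r2 > 0"
      and sig: "sg1 > 0" "sg2 > 0"
      and um: "0 \<le> umax" "umax < 1"
      and hor: "T > 0"
      and ini: "s0 > 0" "e0 > 0" "i0 > 0" "j0 > 0"
      and adm: "admissible umax T u"
      and sol: "state_sol b1 b2 g sg1 sg2 r1 r2 T s0 e0 i0 j0 u s e i j"
  shows "\<forall>t\<in>{0..T}. s t > 0 \<and> e t > 0 \<and> i t > 0 \<and> j t > 0"
proof (rule ccontr)
  assume nall: "\<not> (\<forall>t\<in>{0..T}. s t > 0 \<and> e t > 0 \<and> i t > 0 \<and> j t > 0)"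
  have hs: "\<forall>t\<in>{0..T}. ((\<lambda>\<tau>. - incid b1 b2 (u \<tau>) (s \<tau>) (i \<tau>) (j \<tau>)) has_integral (s t - s0)) {0..t}"
    and he: "\<forall>t\<in>{0..T}. ((\<lambda>\<tau>. incid b1 b2 (u \<tau>) (s \<tau>) (i \<tau>) (j \<tau>) - g * e \<tau>) has_integral (e t - e0)) {0..t}"
    and hi: "\<forall>t\<in>{0..T}. ((\<lambda>\<tau>. sg1 * g * e \<tau> - r1 * i \<tau>) has_integral (i t - i0)) {0..t}"
    and hj: "\<forall>t\<in>{0..T}. ((\<lambda>\<tau>. sg2 * g * e \<tau> - r2 * j \<tau>) has_integral (j t - j0)) {0..t}"
    using sol unfolding state_sol_def by blast+
  have T0: "0 \<le> T" using hor by simp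
  have cs: "continuous_on {0..T} s" by (rule cont_fwd[OF hs T0])
  have ce: "continuous_on {0..T} e" by (rule cont_fwd[OF he T0])
  have ci: "continuous_on {0..T} i" by (rule cont_fwd[OF hi T0])
  have cj: "continuous_on {0..T} j" by (rule cont_fwd[OF hj T0])
  have s0': "s 0 = s0" by (rule init_val[OF hs T0])
  have e0': "e 0 = e0" by (rule init_val[OF he T0])
  have i0': "i 0 = i0" by (rule init_val[OF hi T0])
  have j0': "j 0 = j0" by (rule init_val[OF hj T0])
  have ub: "\<forall>t\<in>{0..T}. 0 \<le> u t \<and> u t \<le> umax" using adm unfolding admissible_def by blast
  have neT: "{0..T} \<noteq> {}" using T0 by simp
  obtain ti where "ti \<in> {0..T}" and Mi: "\<forall>y\<in>{0..T}. i y \<le> i ti"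
    using continuous_attains_sup[OF compact_Icc neT ci] by blast
  obtain tj where "tj \<in> {0..T}" and Mj: "\<forall>y\<in>{0..T}. j y \<le> j tj"
    using continuous_attains_sup[OF compact_Icc neT cj] by blast
  define K where "K = b1 * max 0 (i ti) + b2 * max 0 (j tj)"
  have K0: "K \<ge> 0" unfolding K_def using par by simp
  define Z where "Z = {t\<in>{0..T}. s t \<le> 0 \<or> e t \<le> 0 \<or> i t \<le> 0 \<or> j t \<le> 0}"
  have Zne: "Z \<noteq> {}" using nall unfolding Z_def by force
  have Zeq: "Z = ({0..T} \<inter> s -` {..0}) \<union> ({0..T} \<inter> e -` {..0}) \<union> ({0..T} \<inter> i -` {..0}) \<union> ({0..T} \<inter> j -` {..0})"
    unfolding Z_def by auto
  have "closed Z" unfolding Zeq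
    by (intro closed_Un continuous_closed_preimage cs ce ci cj closed_atLeastAtMost closed_atMost)
  moreover have "Z \<subseteq> {0..T}" unfolding Z_def by auto
  then have "bounded Z" using bounded_subset[OF compact_imp_bounded[OF compact_Icc]] by blast
  ultimately have "compact Z" using compact_eq_bounded_closed by blast
  then obtain t1 where t1Z: "t1 \<in> Z" and t1min: "\<forall>y\<in>Z. t1 \<le> y"
    using compact_attains_inf[OF _ Zne] by blast
  have t1T: "0 \<le> t1" "t1 \<le> T" using t1Z unfolding Z_def by auto
  have "t1 \<noteq> 0" using t1Z s0' e0' i0' j0' ini unfolding Z_def by auto
  then have t1p: "0 < t1" using t1T by simp
  have before: "\<forall>t\<in>{0..<t1}. s t > 0 \<and> e t > 0 \<and> i t > 0 \<and> j t > 0"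
  proof
    fix t assume t: "t \<in> {0..<t1}"
    then have "t \<notin> Z" using t1min by force
    then show "s t > 0 \<and> e t > 0 \<and> i t > 0 \<and> j t > 0" using t t1T unfolding Z_def by auto
  qed
  have sub: "{0..t1} \<subseteq> {0..T}" using t1T by auto
  have cs1: "continuous_on {0..t1} s" using continuous_on_subset[OF cs sub] .
  have ce1: "continuous_on {0..t1} e" using continuous_on_subset[OF ce sub] .
  have ci1: "continuous_on {0..t1} i" using continuous_on_subset[OF ci sub] .
  have cj1: "continuous_on {0..t1} j" using continuous_on_subset[OF cj sub] .
  have cl: "closure {0..<t1} = {0..t1}" using t1p by simp
  have nnt1: "s t1 \<ge> 0 \<and> e t1 \<ge> 0 \<and> i t1 \<ge> 0 \<and> j t1 \<ge> 0"
  proof -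
    have t1c: "t1 \<in> closure {0..<t1}" using cl t1T by auto
    have bs: "\<forall>t\<in>{0..<t1}. s t \<ge> 0" "\<forall>t\<in>{0..<t1}. e t \<ge> 0"
      "\<forall>t\<in>{0..<t1}. i t \<ge> 0" "\<forall>t\<in>{0..<t1}. j t \<ge> 0"
      using before by (meson less_imp_le)+
    have "s t1 \<ge> 0" by (rule continuous_ge_on_closure[where S="{0..<t1}" and f=s and x=t1 and a=0]) (use cl cs1 t1c bs in auto)
    moreover have "e t1 \<ge> 0" by (rule continuous_ge_on_closure[where S="{0..<t1}" and f=e and x=t1 and a=0]) (use cl ce1 t1c bs in auto)
    moreover have "i t1 \<ge> 0" by (rule continuous_ge_on_closure[where S="{0..<t1}" and f=i and x=t1 and a=0]) (use cl ci1 t1c bs in auto)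
    moreover have "j t1 \<ge> 0" by (rule continuous_ge_on_closure[where S="{0..<t1}" and f=j and x=t1 and a=0]) (use cl cj1 t1c bs in auto)
    ultimately show ?thesis by blast
  qed
  have nn: "\<forall>t\<in>{0..t1}. s t \<ge> 0 \<and> e t \<ge> 0 \<and> i t \<ge> 0 \<and> j t \<ge> 0"
  proof
    fix t assume t: "t \<in> {0..t1}"
    show "s t \<ge> 0 \<and> e t \<ge> 0 \<and> i t \<ge> 0 \<and> j t \<ge> 0"
    proof (cases "t = t1")
      case True then show ?thesis using nnt1 by simp
    next
      case False then have "t \<in> {0..<t1}" using t by auto
      then show ?thesis using before by (meson less_imp_le)
    qed
  qed
  have kk: "0 \<le> b1 * (1 - u \<tau>)^2 * i \<tau> + b2 * (1 - u \<tau>) * j \<tau> \<and>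
            b1 * (1 - u \<tau>)^2 * i \<tau> + b2 * (1 - u \<tau>) * j \<tau> \<le> K" if t: "\<tau> \<in> {0..t1}" for \<tau>
  proof -
    have u1: "0 \<le> u \<tau>" "u \<tau> \<le> umax" using ub t sub by auto
    have a: "0 \<le> 1 - u \<tau>" "1 - u \<tau> \<le> 1" using u1 um by auto
    have a2: "0 \<le> (1 - u \<tau>)^2" "(1 - u \<tau>)^2 \<le> 1" using a by (auto simp: power_le_one)
    have ii: "0 \<le> i \<tau>" "0 \<le> j \<tau>" using nn t by auto
    have "\<tau> \<in> {0..T}" using t sub by auto
    then have im: "i \<tau> \<le> max 0 (i ti)" "j \<tau> \<le> max 0 (j tj)" using Mi Mj by fastforce+
    have "(1 - u \<tau>)^2 * i \<tau> \<le> 1 * i \<tau>" by (rule mult_right_mono[OF a2(2) ii(1)])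
    then have "(1 - u \<tau>)^2 * i \<tau> \<le> max 0 (i ti)" using im by linarith
    then have "b1 * ((1 - u \<tau>)^2 * i \<tau>) \<le> b1 * max 0 (i ti)"
      using par by (intro mult_left_mono) auto
    then have x1: "b1 * (1 - u \<tau>)^2 * i \<tau> \<le> b1 * max 0 (i ti)" by (simp add: mult.assoc)
    have "(1 - u \<tau>) * j \<tau> \<le> 1 * j \<tau>" by (rule mult_right_mono[OF a(2) ii(2)])
    then have "(1 - u \<tau>) * j \<tau> \<le> max 0 (j tj)" using im by linarith
    then have "b2 * ((1 - u \<tau>) * j \<tau>) \<le> b2 * max 0 (j tj)"
      using par by (intro mult_left_mono) auto
    then have x2: "b2 * (1 - u \<tau>) * j \<tau> \<le> b2 * max 0 (j tj)" by (simp add: mult.assoc)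
    have y1: "0 \<le> b1 * (1 - u \<tau>)^2 * i \<tau>" using par a2 ii by simp
    have y2: "0 \<le> b2 * (1 - u \<tau>) * j \<tau>" using par a ii by simp
    show ?thesis using x1 x2 y1 y2 unfolding K_def by linarith
  qed
  have "s t1 > 0"
  proof (rule pos_end[OF t1p cs1 _ K0])
    show "\<forall>t\<in>{0..<t1}. 0 < s t" using before by blast
    show "\<forall>t\<in>{0..t1}. s t - K * integral {t..t1} s \<le> s t1"
    proof (rule step_cond[OF hs t1T cs1], rule ballI)
      fix \<tau> assume t: "\<tau> \<in> {0..t1}"
      have "s \<tau> * (b1 * (1 - u \<tau>)^2 * i \<tau> + b2 * (1 - u \<tau>) * j \<tau>) \<le> s \<tau> * K"
      proof (rule mult_left_mono)
        show "b1 * (1 - u \<tau>)^2 * i \<tau> + b2 * (1 - u \<tau>) * j \<tau> \<le> K" using kk[OF t] by blast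
        show "0 \<le> s \<tau>" using nn t by blast
      qed
      then show "0 \<le> - incid b1 b2 (u \<tau>) (s \<tau>) (i \<tau>) (j \<tau>) + K * s \<tau>"
        unfolding incid_def by (simp add: algebra_simps)
    qed
  qed
  moreover have "e t1 > 0"
  proof (rule pos_end[OF t1p ce1 _ less_imp_le[OF par(3)]])
    show "\<forall>t\<in>{0..<t1}. 0 < e t" using before by blast
    show "\<forall>t\<in>{0..t1}. e t - g * integral {t..t1} e \<le> e t1"
    proof (rule step_cond[OF he t1T ce1], rule ballI)
      fix \<tau> assume t: "\<tau> \<in> {0..t1}"
      have "0 \<le> s \<tau> * (b1 * (1 - u \<tau>)^2 * i \<tau> + b2 * (1 - u \<tau>) * j \<tau>)"
      proof (rule mult_nonneg_nonneg)
        show "0 \<le> b1 * (1 - u \<tau>)^2 * i \<tau> + b2 * (1 - u \<tau>) * j \<tau>" using kk[OF t] by blast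
        show "0 \<le> s \<tau>" using nn t by blast
      qed
      then show "0 \<le> incid b1 b2 (u \<tau>) (s \<tau>) (i \<tau>) (j \<tau>) - g * e \<tau> + g * e \<tau>"
        unfolding incid_def by simp
    qed
  qed
  moreover have "i t1 > 0"
  proof (rule pos_end[OF t1p ci1 _ less_imp_le[OF par(4)]])
    show "\<forall>t\<in>{0..<t1}. 0 < i t" using before by blast
    show "\<forall>t\<in>{0..t1}. i t - r1 * integral {t..t1} i \<le> i t1"
    proof (rule step_cond[OF hi t1T ci1], rule ballI)
      fix \<tau> assume t: "\<tau> \<in> {0..t1}"
      have "0 \<le> sg1 * g * e \<tau>" using nn t par sig by (intro mult_nonneg_nonneg) auto
      then show "0 \<le> sg1 * g * e \<tau> - r1 * i \<tau> + r1 * i \<tau>" by simp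
    qed
  qed
  moreover have "j t1 > 0"
  proof (rule pos_end[OF t1p cj1 _ less_imp_le[OF par(5)]])
    show "\<forall>t\<in>{0..<t1}. 0 < j t" using before by blast
    show "\<forall>t\<in>{0..t1}. j t - r2 * integral {t..t1} j \<le> j t1"
    proof (rule step_cond[OF hj t1T cj1], rule ballI)
      fix \<tau> assume t: "\<tau> \<in> {0..t1}"
      have "0 \<le> sg2 * g * e \<tau>" using nn t par sig by (intro mult_nonneg_nonneg) auto
      then show "0 \<le> sg2 * g * e \<tau> - r2 * j \<tau> + r2 * j \<tau>" by simp
    qed
  qed
  ultimately show False using t1Z unfolding Z_def by auto
qed

definition Fu :: "real \<Rightarrow> real \<Rightarrow> real \<Rightarrow> real \<Rightarrow> real \<Rightarrow> real \<Rightarrow> real \<Rightarrow> real \<Rightarrow> real" where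
  "Fu b1 b2 a3 S I J D z = - incid b1 b2 z S I J * D - 0.5 * a3 * z^2"

lemma ham_diff:
  "hamiltonian b1 b2 g sg1 sg2 r1 r2 a2 a3 s e i j p1 p2 p3 p4 v
   - hamiltonian b1 b2 g sg1 sg2 r1 r2 a2 a3 s e i j p1 p2 p3 p4 w
   = Fu b1 b2 a3 s i j (p1 - p2) v - Fu b1 b2 a3 s i j (p1 - p2) w"
  unfolding hamiltonian_def Fu_def by (simp add: algebra_simps)

lemma Fu_mid:
  "Fu b1 b2 a3 S I J D ((v + w)/2) - (Fu b1 b2 a3 S I J D v + Fu b1 b2 a3 S I J D w)/2
   = (S * D * b1 * I + 0.5 * a3) * (v - w)^2 / 4"
  unfolding Fu_def incid_def by (simp add: field_simps power2_eq_square)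

lemma Fu_dec:
  "Fu b1 b2 a3 S I J D x - Fu b1 b2 a3 S I J D y
   = (- (S * D)) * (b1 * I * ((y - x) * (2 - x - y)) + b2 * J * (y - x)) + 0.5 * a3 * ((y - x) * (y + x))"
  unfolding Fu_def incid_def by (simp add: field_simps power2_eq_square)

lemma Fu_strict_dec:
  assumes "b1 > 0" "b2 > 0" "a3 > 0" "I \<ge> 0" "J \<ge> 0" "S * D < 0"
    and "0 \<le> x" "x < y" "y < 1"
  shows "Fu b1 b2 a3 S I J D y < Fu b1 b2 a3 S I J D x"
proof -
  have p: "0 < - (S * D)" using assms by simp
  have q1: "0 \<le> b1 * I * ((y - x) * (2 - x - y))" using assms by simp
  have q2: "0 \<le> b2 * J * (y - x)" using assms by simp
  have q: "0 \<le> (- (S * D)) * (b1 * I * ((y - x) * (2 - x - y)) + b2 * J * (y - x))"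
    by (rule mult_nonneg_nonneg[OF less_imp_le[OF p] add_nonneg_nonneg[OF q1 q2]])
  have r: "0 < 0.5 * a3 * ((y - x) * (y + x))" using assms by simp
  show ?thesis using Fu_dec[of b1 b2 a3 S I J D x y] q r by linarith
qed

lemma half_aux: "0 < (c::real) - (a + b)/2 \<Longrightarrow> a = b \<Longrightarrow> a < c"
  by (simp add: field_simps)

lemma uniq:
  assumes par: "b1 > 0" "b2 > 0" "a3 > 0" and nn: "S \<ge> 0" "I \<ge> 0" "J \<ge> 0" and um: "um < 1"
    and v: "v \<in> {0..um}" and w: "w \<in> {0..um}"
    and mv: "\<forall>z\<in>{0..um}. Fu b1 b2 a3 S I J D z \<le> Fu b1 b2 a3 S I J D v"
    and mw: "\<forall>z\<in>{0..um}. Fu b1 b2 a3 S I J D z \<le> Fu b1 b2 a3 S I J D w"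
  shows "v = w"
proof (rule ccontr)
  assume ne: "v \<noteq> w"
  have eq: "Fu b1 b2 a3 S I J D v = Fu b1 b2 a3 S I J D w" using mv mw v w by (meson order_antisym)
  show False
  proof (cases "S * D \<ge> 0")
    case True
    have m: "(v + w)/2 \<in> {0..um}" using v w by auto
    have "0 \<le> S * D * b1 * I" using True par nn by simp
    moreover have "0 < (v - w)^2" using ne by simp
    ultimately have "0 < (S * D * b1 * I + 0.5 * a3) * (v - w)^2 / 4" using par by simp
    then have "0 < Fu b1 b2 a3 S I J D ((v + w)/2) - (Fu b1 b2 a3 S I J D v + Fu b1 b2 a3 S I J D w)/2"
      by (subst Fu_mid)
    then have "Fu b1 b2 a3 S I J D v < Fu b1 b2 a3 S I J D ((v + w)/2)"
      using eq by (rule half_aux)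
    then show False using mv m by fastforce
  next
    case False
    then have sd: "S * D < 0" by simp
    show False
    proof (cases "v < w")
      case True
      then show False using Fu_strict_dec[OF par nn(2,3) sd, of v w] v w um eq by auto
    next
      case False
      then have "w < v" using ne by simp
      then show False using Fu_strict_dec[OF par nn(2,3) sd, of w v] v w um eq by auto
    qed
  qed
qed

lemma cfst:
  assumes "continuous_on {0..T} f"
  shows "continuous_on ({0..T} \<times> X) (\<lambda>p. f (fst p))"
  by (rule continuous_on_compose2[OF assms continuous_on_fst[OF continuous_on_id]]) auto

theorem lemma5:
  fixes b1 b2 g r1 r2 sg1 sg2 umax a1 a2 a3 T s0 e0 i0 j0 :: real
    and u s e i j p1 p2 p3 p4 :: "real \<Rightarrow> real"
  assumes par: "b1 > 0" "b2 > 0" "g > 0" "r1 > 0" "r2 > 0"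
      and sig: "sg1 > 0" "sg2 > 0" "sg1 + sg2 = 1"
      and um: "0 \<le> umax" "umax < 1"
      and wts: "a1 \<ge> 0" "a2 \<ge> 0" "a3 > 0"
      and hor: "T > 0"
      and ini: "s0 > 0" "e0 > 0" "i0 > 0" "j0 > 0" "s0 + e0 + i0 + j0 \<le> 1"
      and adm: "admissible umax T u"
      and sol: "state_sol b1 b2 g sg1 sg2 r1 r2 T s0 e0 i0 j0 u s e i j"
      and opt: "\<forall>v s' e' i' j'. admissible umax T v \<and>
                   state_sol b1 b2 g sg1 sg2 r1 r2 T s0 e0 i0 j0 v s' e' i' j' \<longrightarrow>
                   cost a1 a2 a3 T u e i j \<le> cost a1 a2 a3 T v e' i' j'"
      and adj: "adjoint_sol b1 b2 g sg1 sg2 r1 r2 a1 a2 T u s i j p1 p2 p3 p4"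
      and nontriv: "\<exists>t\<in>{0..T}. p1 t \<noteq> 0 \<or> p2 t \<noteq> 0 \<or> p3 t \<noteq> 0 \<or> p4 t \<noteq> 0"
      and maxH: "\<forall>t\<in>{0..T}. \<forall>v\<in>{0..umax}.
                   hamiltonian b1 b2 g sg1 sg2 r1 r2 a2 a3 (s t) (e t) (i t) (j t)
                     (p1 t) (p2 t) (p3 t) (p4 t) v
                   \<le> hamiltonian b1 b2 g sg1 sg2 r1 r2 a2 a3 (s t) (e t) (i t) (j t)
                     (p1 t) (p2 t) (p3 t) (p4 t) (u t)"
  shows "continuous_on {0..T} u"
proof -
  have pos: "\<forall>t\<in>{0..T}. s t > 0 \<and> e t > 0 \<and> i t > 0 \<and> j t > 0"
    by (rule positivity[OF par sig(1,2) um hor ini(1-4) adm sol])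
  have hs: "\<forall>t\<in>{0..T}. ((\<lambda>\<tau>. - incid b1 b2 (u \<tau>) (s \<tau>) (i \<tau>) (j \<tau>)) has_integral (s t - s0)) {0..t}"
    and hi: "\<forall>t\<in>{0..T}. ((\<lambda>\<tau>. sg1 * g * e \<tau> - r1 * i \<tau>) has_integral (i t - i0)) {0..t}"
    and hj: "\<forall>t\<in>{0..T}. ((\<lambda>\<tau>. sg2 * g * e \<tau> - r2 * j \<tau>) has_integral (j t - j0)) {0..t}"
    using sol unfolding state_sol_def by blast+
  have hp1: "\<forall>t\<in>{0..T}. ((\<lambda>\<tau>. (b1 * (1 - u \<tau>)^2 * i \<tau> + b2 * (1 - u \<tau>) * j \<tau>) * (p1 \<tau> - p2 \<tau>))
            has_integral (p1 T - p1 t)) {t..T}"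
    and hp2: "\<forall>t\<in>{0..T}. ((\<lambda>\<tau>. g * (p2 \<tau> - sg1 * p3 \<tau> - sg2 * p4 \<tau>) + a2)
            has_integral (p2 T - p2 t)) {t..T}"
    using adj unfolding adjoint_sol_def by blast+
  have T0: "0 \<le> T" using hor by simp
  have cs: "continuous_on {0..T} s" by (rule cont_fwd[OF hs T0])
  have ci: "continuous_on {0..T} i" by (rule cont_fwd[OF hi T0])
  have cj: "continuous_on {0..T} j" by (rule cont_fwd[OF hj T0])
  have cp1: "continuous_on {0..T} p1" by (rule cont_bwd[OF hp1 T0])
  have cp2: "continuous_on {0..T} p2" by (rule cont_bwd[OF hp2 T0])
  have ub: "\<forall>t\<in>{0..T}. 0 \<le> u t \<and> u t \<le> umax" using adm unfolding admissible_def by blast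
  define F where "F = (\<lambda>t v. Fu b1 b2 a3 (s t) (i t) (j t) (p1 t - p2 t) v)"
  have maxF: "\<forall>w\<in>{0..umax}. F t w \<le> F t (u t)" if t: "t \<in> {0..T}" for t
  proof
    fix w assume w: "w \<in> {0..umax}"
    have "hamiltonian b1 b2 g sg1 sg2 r1 r2 a2 a3 (s t) (e t) (i t) (j t) (p1 t) (p2 t) (p3 t) (p4 t) w
       \<le> hamiltonian b1 b2 g sg1 sg2 r1 r2 a2 a3 (s t) (e t) (i t) (j t) (p1 t) (p2 t) (p3 t) (p4 t) (u t)"
      using maxH t w by blast
    then show "F t w \<le> F t (u t)"
      using ham_diff[of b1 b2 g sg1 sg2 r1 r2 a2 a3 "s t" "e t" "i t" "j t" "p1 t" "p2 t" "p3 t" "p4 t" w "u t"]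
      unfolding F_def by linarith
  qed
  define G where "G = {p \<in> {0..T} \<times> {0..umax}. \<forall>w\<in>{0..umax}. F (fst p) w \<le> F (fst p) (snd p)}"
  have graph: "(\<lambda>t. (t, u t)) ` {0..T} = G"
  proof
    show "(\<lambda>t. (t, u t)) ` {0..T} \<subseteq> G"
    proof
      fix p assume "p \<in> (\<lambda>t. (t, u t)) ` {0..T}"
      then obtain t where t: "t \<in> {0..T}" and p: "p = (t, u t)" by blast
      show "p \<in> G" unfolding G_def using t p ub maxF[OF t] by auto
    qed
    show "G \<subseteq> (\<lambda>t. (t, u t)) ` {0..T}"
    proof
      fix p assume pG: "p \<in> G"
      obtain t v where p: "p = (t, v)" by fastforce
      have t: "t \<in> {0..T}" and v: "v \<in> {0..umax}" and mv: "\<forall>w\<in>{0..umax}. F t w \<le> F t v"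
        using pG p unfolding G_def by auto
      have ut: "u t \<in> {0..umax}" using ub t by auto
      have "v = u t"
      proof (rule uniq[of b1 b2 a3 "s t" "i t" "j t" umax v "u t" "p1 t - p2 t"])
        show "b1 > 0" "b2 > 0" "a3 > 0" "umax < 1" using par wts um by auto
        show "0 \<le> s t" "0 \<le> i t" "0 \<le> j t" using pos t by (meson less_imp_le)+
        show "v \<in> {0..umax}" "u t \<in> {0..umax}" using v ut by auto
        show "\<forall>z\<in>{0..umax}. Fu b1 b2 a3 (s t) (i t) (j t) (p1 t - p2 t) z
                \<le> Fu b1 b2 a3 (s t) (i t) (j t) (p1 t - p2 t) v" using mv unfolding F_def by blast
        show "\<forall>z\<in>{0..umax}. Fu b1 b2 a3 (s t) (i t) (j t) (p1 t - p2 t) z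
                \<le> Fu b1 b2 a3 (s t) (i t) (j t) (p1 t - p2 t) (u t)" using maxF[OF t] unfolding F_def by blast
      qed
      then show "p \<in> (\<lambda>t. (t, u t)) ` {0..T}" using p t by auto
    qed
  qed
  define R where "R = {0..T} \<times> {0..umax}"
  have cR: "closed R" unfolding R_def by (intro closed_Times closed_atLeastAtMost)
  have cont: "continuous_on R (\<lambda>p. F (fst p) (snd p) - F (fst p) w)" for w
  proof -
    have a: "continuous_on R (\<lambda>p. s (fst p))" unfolding R_def by (rule cfst[OF cs])
    have b: "continuous_on R (\<lambda>p. i (fst p))" unfolding R_def by (rule cfst[OF ci])
    have c: "continuous_on R (\<lambda>p. j (fst p))" unfolding R_def by (rule cfst[OF cj])
    have d: "continuous_on R (\<lambda>p. p1 (fst p))" unfolding R_def by (rule cfst[OF cp1])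
    have f: "continuous_on R (\<lambda>p. p2 (fst p))" unfolding R_def by (rule cfst[OF cp2])
    have sn: "continuous_on R (\<lambda>p. snd p)" by (rule continuous_on_snd[OF continuous_on_id])
    show ?thesis unfolding F_def Fu_def incid_def
      by (intro continuous_on_diff continuous_on_mult continuous_on_add continuous_on_minus
          continuous_on_power continuous_on_const a b c d f sn)
  qed
  have GR: "G = R \<inter> (\<Inter>w\<in>{0..umax}. R \<inter> (\<lambda>p. F (fst p) (snd p) - F (fst p) w) -` {0..})"
    unfolding G_def R_def by auto
  have "closed G" unfolding GR
    by (intro closed_Int cR closed_INT ballI continuous_closed_preimage cont closed_atLeast)
  show ?thesis
  proof (rule continuous_from_closed_graph[OF compact_Icc])
    show "u \<in> {0..T} \<rightarrow> {0..umax}" using ub by auto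
    show "closed ((\<lambda>x. (x, u x)) ` {0..T})" using graph \<open>closed G\<close> by simp
  qed
qed

end
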